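(* Let $\lambda>0$ and let $h$ be any left-invariant metric on $G$. Then: (1) the unique inverse-linear path from $h_0$ to $h$ is nonnegative if and only if the unique inverse-linear path from $\lambda h_0$ to $h$ is nonnegative; (2) the unique inverse-linear path from $h_0$ to $h$ is locally nonnegative if and only if the unique inverse-linear path from $\lambda h_0$ to $h$ is locally nonnegative; (3) the unique inverse-linear path from $h_0$ to $h$ is infinitesimally nonnegative if and only if the unique inverse-linear path from $\lambda h_0$ to $h$ is infinitesimally nonnegative.
   Context: $G$ is a compact Lie group with Lie algebra $\mathfrak g$ and bi-invariant metric $h_0$. For a bi-invariant metric $b$ and a left-invariant metric $h$, let $\Phi$ be the $b$-self-adjoint positive definite endomorphism of $\mathfrak g$ with $h(X,Y)=b(\Phi X,Y)$. The unique inverse-linear path from $b$ to $h$ is $\Phi_t=(I-t\Psi)^{-1}$ with $\Psi=I-\Phi^{-1}$, giving left-invariant metrics $h_t(X,Y)=b(\Phi_tX,Y)$ with $h_0$-path starting at $b$ ($t=0$) and ending at $h$ ($t=1$). The unnormalized sectional curvature is $k_h(Z_1,Z_2)=h(R_h(Z_1,Z_2)Z_2,Z_1)$ and for fixed $X,Y\in\mathfrak g$, $\kappa(t)=k_{h_t}(\Phi_t^{-1}X,\Phi_t^{-1}Y)$. The path is nonnegative if $h_t$ has nonnegative sectional curvature for all $0\le t\le1$; infinitesimally nonnegative if for every $X,Y\in\mathfrak g$ there is $\varepsilon>0$ with $\kappa(t)\ge0$ for $t\in[0,\varepsilon)$; locally nonnegative if one $\varepsilon>0$ works for all pairs $X,Y$.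 *)

theory Defs
  imports "HOL-Analysis.Analysis"
begin

text \<open>The Lie algebra g of the compact Lie group G is modelled as a finite-dimensional
real inner product space 'a (euclidean_space), whose inner product is the bi-invariant
metric h0, together with a Lie bracket br which is ad-invariant w.r.t. h0.\<close>

definition compact_lie_algebra :: "('a::euclidean_space \<Rightarrow> 'a \<Rightarrow> 'a) \<Rightarrow> bool" where
  "compact_lie_algebra br \<longleftrightarrow>
     bilinear br \<and>
     (\<forall>X Y. br X Y = - br Y X) \<and>
     (\<forall>X Y Z. br X (br Y Z) + br Y (br Z X) + br Z (br X Y) = 0) \<and>
     (\<forall>X Y Z. inner (br X Y) Z + inner Y (br X Z) = 0)"

definition left_inv_metric :: "('a::euclidean_space \<Rightarrow> 'a \<Rightarrow> real) \<Rightarrow> bool" where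
  "left_inv_metric h \<longleftrightarrow> bilinear h \<and> (\<forall>X Y. h X Y = h Y X) \<and> (\<forall>X. X \<noteq> 0 \<longrightarrow> h X X > 0)"

text \<open>Levi-Civita connection of a left-invariant metric on left-invariant fields (Koszul formula).\<close>
definition lc_nabla :: "('a::euclidean_space \<Rightarrow> 'a \<Rightarrow> 'a) \<Rightarrow> ('a \<Rightarrow> 'a \<Rightarrow> real) \<Rightarrow> 'a \<Rightarrow> 'a \<Rightarrow> 'a" where
  "lc_nabla br g X Y = (THE V. \<forall>Z. 2 * g V Z = g (br X Y) Z - g (br Y Z) X + g (br Z X) Y)"

definition curv :: "('a::euclidean_space \<Rightarrow> 'a \<Rightarrow> 'a) \<Rightarrow> ('a \<Rightarrow> 'a \<Rightarrow> real) \<Rightarrow> 'a \<Rightarrow> 'a \<Rightarrow> 'a \<Rightarrow> 'a" where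
  "curv br g X Y Z = lc_nabla br g X (lc_nabla br g Y Z) - lc_nabla br g Y (lc_nabla br g X Z)
                     - lc_nabla br g (br X Y) Z"

text \<open>Unnormalized sectional curvature k_h(Z1,Z2) = h(R_h(Z1,Z2)Z2, Z1).\<close>
definition sec_k :: "('a::euclidean_space \<Rightarrow> 'a \<Rightarrow> 'a) \<Rightarrow> ('a \<Rightarrow> 'a \<Rightarrow> real) \<Rightarrow> 'a \<Rightarrow> 'a \<Rightarrow> real" where
  "sec_k br g Z1 Z2 = g (curv br g Z1 Z2 Z2) Z1"

definition endo_of :: "('a::euclidean_space \<Rightarrow> 'a \<Rightarrow> real) \<Rightarrow> ('a \<Rightarrow> 'a \<Rightarrow> real) \<Rightarrow> 'a \<Rightarrow> 'a" where
  "endo_of b h = (THE \<Phi>. linear \<Phi> \<and> (\<forall>X Y. b (\<Phi> X) Y = h X Y))"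

definition path_Phi :: "('a::euclidean_space \<Rightarrow> 'a \<Rightarrow> real) \<Rightarrow> ('a \<Rightarrow> 'a \<Rightarrow> real) \<Rightarrow> real \<Rightarrow> 'a \<Rightarrow> 'a" where
  "path_Phi b h t = inv (\<lambda>X. X - t *\<^sub>R (X - inv (endo_of b h) X))"

definition path_metric :: "('a::euclidean_space \<Rightarrow> 'a \<Rightarrow> real) \<Rightarrow> ('a \<Rightarrow> 'a \<Rightarrow> real) \<Rightarrow> real \<Rightarrow> 'a \<Rightarrow> 'a \<Rightarrow> real" where
  "path_metric b h t X Y = b (path_Phi b h t X) Y"

definition path_kappa :: "('a::euclidean_space \<Rightarrow> 'a \<Rightarrow> 'a) \<Rightarrow> ('a \<Rightarrow> 'a \<Rightarrow> real) \<Rightarrow> ('a \<Rightarrow> 'a \<Rightarrow> real) \<Rightarrow> 'a \<Rightarrow> 'a \<Rightarrow> real \<Rightarrow> real" where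
  "path_kappa br b h X Y t =
     sec_k br (path_metric b h t) (inv (path_Phi b h t) X) (inv (path_Phi b h t) Y)"

definition path_nonneg :: "('a::euclidean_space \<Rightarrow> 'a \<Rightarrow> 'a) \<Rightarrow> ('a \<Rightarrow> 'a \<Rightarrow> real) \<Rightarrow> ('a \<Rightarrow> 'a \<Rightarrow> real) \<Rightarrow> bool" where
  "path_nonneg br b h \<longleftrightarrow> (\<forall>t. 0 \<le> t \<and> t \<le> 1 \<longrightarrow> (\<forall>Z1 Z2. sec_k br (path_metric b h t) Z1 Z2 \<ge> 0))"

definition path_inf_nonneg :: "('a::euclidean_space \<Rightarrow> 'a \<Rightarrow> 'a) \<Rightarrow> ('a \<Rightarrow> 'a \<Rightarrow> real) \<Rightarrow> ('a \<Rightarrow> 'a \<Rightarrow> real) \<Rightarrow> bool" where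
  "path_inf_nonneg br b h \<longleftrightarrow>
     (\<forall>X Y. \<exists>\<epsilon>>0. \<forall>t. 0 \<le> t \<and> t < \<epsilon> \<longrightarrow> path_kappa br b h X Y t \<ge> 0)"

definition path_loc_nonneg :: "('a::euclidean_space \<Rightarrow> 'a \<Rightarrow> 'a) \<Rightarrow> ('a \<Rightarrow> 'a \<Rightarrow> real) \<Rightarrow> ('a \<Rightarrow> 'a \<Rightarrow> real) \<Rightarrow> bool" where
  "path_loc_nonneg br b h \<longleftrightarrow>
     (\<exists>\<epsilon>>0. \<forall>X Y. \<forall>t. 0 \<le> t \<and> t < \<epsilon> \<longrightarrow> path_kappa br b h X Y t \<ge> 0)"

end

theory Submission
  imports Defs
begin

definition Sf :: "real \<Rightarrow> real \<Rightarrow> real" where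
  "Sf \<mu> t = \<mu> * t / ((1 - t) + \<mu> * t)"

lemma D_pos: "\<mu> > 0 \<Longrightarrow> 0 \<le> t \<Longrightarrow> t \<le> (1::real) \<Longrightarrow> (1 - t) + \<mu> * t > 0"
proof (cases "t = 0")
  case False
  assume "\<mu> > 0" "0 \<le> t" "t \<le> 1"
  then have "\<mu> * t > 0" using False by simp
  then show ?thesis using \<open>t \<le> 1\<close> by linarith
qed simp

lemma Sf_range: assumes "\<mu> > 0" "0 \<le> t" "t \<le> 1" shows "0 \<le> Sf \<mu> t \<and> Sf \<mu> t \<le> 1"
proof -
  have D: "(1 - t) + \<mu> * t > 0" using D_pos assms by blast
  have "\<mu> * t \<ge> 0" using assms by simp
  moreover have "\<mu> * t \<le> (1 - t) + \<mu> * t" using assms by simp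
  ultimately show ?thesis using D unfolding Sf_def by (simp add: divide_le_eq_1)
qed

lemma Sf_pos: assumes "\<mu> > 0" "0 < t" "t \<le> 1" shows "0 < Sf \<mu> t"
  using D_pos[of \<mu> t] assms unfolding Sf_def by simp

lemma Sf_mono: assumes "\<mu> > 0" "0 \<le> t1" "t1 \<le> t2" "t2 \<le> 1" shows "Sf \<mu> t1 \<le> Sf \<mu> t2"
proof -
  have D1: "(1 - t1) + \<mu> * t1 > 0" using D_pos assms by simp
  have D2: "(1 - t2) + \<mu> * t2 > 0" using D_pos assms by simp
  have "\<mu> * t1 * ((1 - t2) + \<mu> * t2) \<le> \<mu> * t2 * ((1 - t1) + \<mu> * t1)"
  proof -
    have "\<mu> * t1 * ((1 - t2) + \<mu> * t2) = \<mu> * t1 + \<mu> * \<mu> * t1 * t2 - \<mu> * t1 * t2" by (simp add: algebra_simps)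
    moreover have "\<mu> * t2 * ((1 - t1) + \<mu> * t1) = \<mu> * t2 + \<mu> * \<mu> * t1 * t2 - \<mu> * t1 * t2" by (simp add: algebra_simps)
    moreover have "\<mu> * t1 \<le> \<mu> * t2" using assms by simp
    ultimately show ?thesis by (smt (verit))
  qed
  then show ?thesis unfolding Sf_def using D1 D2 by (simp add: divide_simps)
qed

lemma Sf_inv: assumes "\<mu> > 0" "0 \<le> t" "t \<le> 1" shows "Sf (1/\<mu>) (Sf \<mu> t) = t"
proof -
  have D: "(1 - t) + \<mu> * t > 0" using D_pos assms by blast
  show ?thesis unfolding Sf_def using D assms(1) by (simp add: field_simps)
qed


lemma vec_eq_inner: fixes u v :: "'a::real_inner" assumes "\<And>Z. inner u Z = inner v Z" shows "u = v"
proof -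
  have "inner (u - v) (u - v) = 0" using assms[of "u - v"] by (simp add: inner_diff_left)
  then show ?thesis by simp
qed

definition Gop :: "('a::euclidean_space \<Rightarrow> 'a \<Rightarrow> real) \<Rightarrow> 'a \<Rightarrow> 'a" where
  "Gop g X = (\<Sum>b\<in>Basis. g X b *\<^sub>R b)"

lemma Gop_inner: assumes "bilinear g" shows "inner (Gop g X) Y = g X Y"
proof -
  have lin: "linear (g X)" using assms unfolding bilinear_def by simp
  have "g X Y = g X (\<Sum>b\<in>Basis. (Y \<bullet> b) *\<^sub>R b)" by (simp add: euclidean_representation)
  also have "\<dots> = (\<Sum>b\<in>Basis. (Y \<bullet> b) * g X b)"
    using lin by (simp add: linear_sum linear_cmul)
  also have "\<dots> = (\<Sum>b\<in>Basis. g X b * inner b Y)"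
    by (simp add: inner_commute mult.commute)
  also have "\<dots> = inner (Gop g X) Y"
    unfolding Gop_def by (simp add: inner_sum_left)
  finally show ?thesis by simp
qed

lemma Gop_linear: assumes "bilinear g" shows "linear (Gop g)"
proof (rule linearI)
  fix x y :: 'a and c :: real
  show "Gop g (x + y) = Gop g x + Gop g y"
    by (rule vec_eq_inner) (simp add: Gop_inner[OF assms] inner_add_left bilinear_ladd[OF assms])
  show "Gop g (c *\<^sub>R x) = c *\<^sub>R Gop g x"
    by (rule vec_eq_inner) (simp add: Gop_inner[OF assms] bilinear_lmul[OF assms])
qed

lemma posdef_bij: fixes A :: "'a::euclidean_space \<Rightarrow> 'a"
  assumes "linear A" "\<And>X. X \<noteq> 0 \<Longrightarrow> inner (A X) X > 0" shows "bij A"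
proof -
  have "inj A"
  proof (rule injI)
    fix x y assume "A x = A y"
    then have "A (x - y) = 0" using assms(1) by (simp add: linear_diff)
    then show "x = y" using assms(2)[of "x - y"] by auto
  qed
  then show ?thesis using assms(1) by (simp add: bij_def eucl.linear_inj_imp_surj)
qed

lemma Gop_bij: assumes "left_inv_metric g" shows "bij (Gop g)"
proof -
  have bg: "bilinear g" and pd: "\<And>X. X \<noteq> 0 \<Longrightarrow> g X X > 0"
    using assms unfolding left_inv_metric_def by auto
  show ?thesis by (rule posdef_bij[OF Gop_linear[OF bg]]) (simp add: Gop_inner[OF bg] pd)
qed

lemma nabla_formula:
  fixes br :: "'a::euclidean_space \<Rightarrow> 'a \<Rightarrow> 'a"
  assumes br: "compact_lie_algebra br" and g: "left_inv_metric g"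
  shows "lc_nabla br g X Y = inv (Gop g) ((1/2) *\<^sub>R (Gop g (br X Y) + br Y (Gop g X) + br X (Gop g Y)))"
proof -
  let ?G = "Gop g"
  let ?N = "inv ?G ((1/2) *\<^sub>R (?G (br X Y) + br Y (?G X) + br X (?G Y)))"
  have bg: "bilinear g" and sym: "\<And>X Y. g X Y = g Y X" using g unfolding left_inv_metric_def by blast+
  note cl = br[unfolded compact_lie_algebra_def]
  have bb: "bilinear br" using cl by blast
  have anti: "\<And>X Y. br X Y = - br Y X" using cl by blast
  have adi: "\<And>X Y Z. inner (br X Y) Z + inner Y (br X Z) = 0" using cl by blast
  have bij: "bij ?G" using Gop_bij[OF g] .
  have GN: "?G ?N = (1/2) *\<^sub>R (?G (br X Y) + br Y (?G X) + br X (?G Y))"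
    using bij by (simp add: bij_is_surj surj_f_inv_f)
  have lin1: "\<And>y. linear (\<lambda>x. g x y)" using bg unfolding bilinear_def by simp
  have P: "2 * g ?N Z = g (br X Y) Z - g (br Y Z) X + g (br Z X) Y" for Z
  proof -
    have e00: "g ?N Z = inner (?G ?N) Z" by (rule Gop_inner[symmetric, OF bg])
    have e01: "inner (?G ?N) Z = (1/2) * (inner (?G (br X Y)) Z + inner (br Y (?G X)) Z + inner (br X (?G Y)) Z)"
      by (simp only: GN inner_scaleR_left inner_add_left)
    have e0: "2 * g ?N Z = inner (?G (br X Y)) Z + inner (br Y (?G X)) Z + inner (br X (?G Y)) Z"
      unfolding e00 e01 by simp
    have e1: "inner (br Y (?G X)) Z = - g (br Y Z) X"
      using adi[of Y "?G X" Z] Gop_inner[OF bg, of X "br Y Z"] sym[of X "br Y Z"] by linarith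
    have e2a: "g (br Z X) Y = g (- br X Z) Y" by (simp only: anti[of Z X])
    have e2: "g (br Z X) Y = - g (br X Z) Y"
      using e2a linear_neg[OF lin1[of Y], of "br X Z"] by linarith
    have e3: "inner (br X (?G Y)) Z = g (br Z X) Y"
      using adi[of X "?G Y" Z] Gop_inner[OF bg, of Y "br X Z"] sym[of Y "br X Z"] e2 by linarith
    have e4: "inner (?G (br X Y)) Z = g (br X Y) Z" by (rule Gop_inner[OF bg])
    show ?thesis using e0 e1 e3 e4 by linarith
  qed
  show ?thesis unfolding lc_nabla_def
  proof (rule the_equality)
    show "\<forall>Z. 2 * g ?N Z = g (br X Y) Z - g (br Y Z) X + g (br Z X) Y" using P by blast
    fix V assume V: "\<forall>Z. 2 * g V Z = g (br X Y) Z - g (br Y Z) X + g (br Z X) Y"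
    have e: "g V Z = g ?N Z" for Z using spec[OF V, of Z] P[of Z] by linarith
    have "?G V = ?G ?N"
      by (rule vec_eq_inner) (simp only: Gop_inner[OF bg] e)
    then show "V = ?N" using bij by (simp add: bij_is_inj inj_eq)
  qed
qed


lemma nabla_scale:
  fixes br :: "'a::euclidean_space \<Rightarrow> 'a \<Rightarrow> 'a"
  assumes br: "compact_lie_algebra br" and g: "left_inv_metric g"
  shows "lc_nabla br g (a *\<^sub>R X) Y = a *\<^sub>R lc_nabla br g X Y"
    and "lc_nabla br g X (a *\<^sub>R Y) = a *\<^sub>R lc_nabla br g X Y"
proof -
  have bg: "bilinear g" using g unfolding left_inv_metric_def by blast
  have bb: "bilinear br" using br unfolding compact_lie_algebra_def by blast
  have lG: "linear (Gop g)" by (rule Gop_linear[OF bg])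
  have lI: "linear (inv (Gop g))"
    using Gop_bij[OF g] lG by (simp add: bij_is_inj eucl.inj_linear_imp_inv_linear)
  let ?G = "Gop g"
  have w: "\<And>u v w::'a. (1/2) *\<^sub>R (a *\<^sub>R u + a *\<^sub>R v + a *\<^sub>R w) = a *\<^sub>R ((1/2) *\<^sub>R (u + v + w))"
    by (simp add: algebra_simps)
  show "lc_nabla br g (a *\<^sub>R X) Y = a *\<^sub>R lc_nabla br g X Y"
    unfolding nabla_formula[OF br g] linear_cmul[OF lG] bilinear_lmul[OF bb] bilinear_rmul[OF bb]
      w linear_cmul[OF lI] ..
  show "lc_nabla br g X (a *\<^sub>R Y) = a *\<^sub>R lc_nabla br g X Y"
    unfolding nabla_formula[OF br g] linear_cmul[OF lG] bilinear_lmul[OF bb] bilinear_rmul[OF bb]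
      w linear_cmul[OF lI] ..
qed

lemma sec_k_hom:
  fixes br :: "'a::euclidean_space \<Rightarrow> 'a \<Rightarrow> 'a"
  assumes br: "compact_lie_algebra br" and g: "left_inv_metric g"
  shows "sec_k br g (a *\<^sub>R X) (a *\<^sub>R Y) = a^4 * sec_k br g X Y"
proof -
  have bg: "bilinear g" using g unfolding left_inv_metric_def by blast
  have bb: "bilinear br" using br unfolding compact_lie_algebra_def by blast
  have "curv br g (a *\<^sub>R X) (a *\<^sub>R Y) (a *\<^sub>R Y) = (a*a*a) *\<^sub>R curv br g X Y Y"
    unfolding curv_def nabla_scale[OF br g] bilinear_lmul[OF bb] bilinear_rmul[OF bb]
    by (simp add: algebra_simps)
  then show ?thesis unfolding sec_k_def
    by (simp add: bilinear_lmul[OF bg] bilinear_rmul[OF bg] power4_eq_xxxx)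
qed

lemma sec_k_scale_metric:
  assumes "r \<noteq> 0"
  shows "sec_k br (\<lambda>X Y. r * g X Y) Z1 Z2 = r * sec_k br g Z1 Z2"
proof -
  have "lc_nabla br (\<lambda>X Y. r * g X Y) = lc_nabla br g"
  proof -
    have key: "(2*(r*a) = r*b - r*c + r*d) = (2*a = b - c + d)" for a b c d :: real
    proof -
      have "2*(r*a) - (r*b - r*c + r*d) = r * (2*a - (b - c + d))" by (simp add: algebra_simps)
      then show ?thesis using assms by (metis eq_iff_diff_eq_0 mult_eq_0_iff)
    qed
    show ?thesis unfolding lc_nabla_def by (simp only: key)
  qed
  then show ?thesis unfolding sec_k_def curv_def by simp
qed


lemma key_eqs:
  fixes br :: "'a::euclidean_space \<Rightarrow> 'a \<Rightarrow> 'a" and h :: "'a \<Rightarrow> 'a \<Rightarrow> real"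
  assumes br: "compact_lie_algebra br" and h: "left_inv_metric h" and lam: "lam > 0"
    and t: "0 \<le> t" "t \<le> 1"
  shows "path_metric (\<lambda>X Y. lam * inner X Y) h t
           = (\<lambda>X Y. (lam / ((1 - t) + lam * t)) * path_metric inner h (Sf lam t) X Y)"
   and "path_kappa br (\<lambda>X Y. lam * inner X Y) h X Y t
           = (lam / ((1 - t) + lam * t)) * ((1 - t) + lam * t)^4 * path_kappa br inner h X Y (Sf lam t)"
   and "left_inv_metric (path_metric inner h (Sf lam t))"
proof -
  define D where "D = (1 - t) + lam * t"
  define s where "s = Sf lam t"
  have Dpos: "D > 0" unfolding D_def using D_pos lam t by blast
  have s01: "0 \<le> s" "s \<le> 1" unfolding s_def using Sf_range lam t by blast+
  have bh: "bilinear h" and symh: "\<And>X Y. h X Y = h Y X" and pdh: "\<And>X. X \<noteq> 0 \<Longrightarrow> h X X > 0"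
    using h unfolding left_inv_metric_def by blast+
  define \<Phi> where "\<Phi> = Gop h"
  have l\<Phi>: "linear \<Phi>" unfolding \<Phi>_def by (rule Gop_linear[OF bh])
  have bij\<Phi>: "bij \<Phi>" unfolding \<Phi>_def by (rule Gop_bij[OF h])
  have i\<Phi>: "\<And>X Y. inner (\<Phi> X) Y = h X Y" unfolding \<Phi>_def by (rule Gop_inner[OF bh])
  have endo1: "endo_of inner h = \<Phi>"
    unfolding endo_of_def
  proof (rule the_equality)
    show "linear \<Phi> \<and> (\<forall>X Y. inner (\<Phi> X) Y = h X Y)" using l\<Phi> i\<Phi> by blast
    fix F assume "linear F \<and> (\<forall>X Y. inner (F X) Y = h X Y)"
    then have "\<And>X Y. inner (F X) Y = inner (\<Phi> X) Y" using i\<Phi> by simp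
    then show "F = \<Phi>" by (intro ext, rule vec_eq_inner)
  qed
  have endo2: "endo_of (\<lambda>X Y. lam * inner X Y) h = (\<lambda>X. (1/lam) *\<^sub>R \<Phi> X)"
    unfolding endo_of_def
  proof (rule the_equality)
    have "linear (\<lambda>X. (1/lam) *\<^sub>R \<Phi> X)" using l\<Phi> by (simp add: linear_compose_scale_right)
    then show "linear (\<lambda>X. (1/lam) *\<^sub>R \<Phi> X) \<and> (\<forall>X Y. lam * inner ((1/lam) *\<^sub>R \<Phi> X) Y = h X Y)"
      using i\<Phi> lam by simp
    fix F assume F: "linear F \<and> (\<forall>X Y. lam * inner (F X) Y = h X Y)"
    have "\<And>X Y. inner (F X) Y = inner ((1/lam) *\<^sub>R \<Phi> X) Y"
    proof -
      fix X Y
      have "lam * inner (F X) Y = h X Y" using F by blast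
      then show "inner (F X) Y = inner ((1/lam) *\<^sub>R \<Phi> X) Y" using i\<Phi>[of X Y] lam
        by (simp add: field_simps)
    qed
    then show "F = (\<lambda>X. (1/lam) *\<^sub>R \<Phi> X)" by (intro ext, rule vec_eq_inner)
  qed
  define P where "P = inv \<Phi>"
  have lP: "linear P" unfolding P_def using l\<Phi> bij\<Phi> by (simp add: bij_is_inj eucl.inj_linear_imp_inv_linear)
  have \<Phi>P: "\<And>X. \<Phi> (P X) = X" unfolding P_def using bij\<Phi> by (simp add: bij_is_surj surj_f_inv_f)
  have P\<Phi>: "\<And>X. P (\<Phi> X) = X" unfolding P_def using bij\<Phi> by (simp add: bij_is_inj)
  have saP: "inner (P X) Y = inner X (P Y)" for X Y
  proof -
    have "inner (P X) Y = inner (P X) (\<Phi> (P Y))" by (simp add: \<Phi>P)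
    also have "\<dots> = h (P Y) (P X)" by (simp add: i\<Phi>[symmetric] inner_commute)
    also have "\<dots> = h (P X) (P Y)" by (rule symh)
    also have "\<dots> = inner X (P Y)" by (simp add: i\<Phi>[symmetric] \<Phi>P)
    finally show ?thesis .
  qed
  have posP: "inner (P X) X > 0" if "X \<noteq> 0" for X
  proof -
    have "P X \<noteq> 0" using that \<Phi>P[of X] linear_0[OF l\<Phi>] by auto
    then have "h (P X) (P X) > 0" by (rule pdh)
    then show ?thesis using i\<Phi>[of "P X" "P X"] \<Phi>P[of X] by (simp add: inner_commute)
  qed
  define A where "A = (\<lambda>u X. X - u *\<^sub>R (X - P X))"
  have lA: "linear (A u)" for u
    unfolding A_def using lP
    by (intro linear_compose_sub linear_compose_scale_right linear_id[unfolded id_def]) auto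
  have saA: "inner (A u X) Y = inner X (A u Y)" for u X Y
    unfolding A_def by (simp add: inner_diff_left inner_diff_right saP)
  have posA: "inner (A u X) X > 0" if "0 \<le> u" "u \<le> 1" "X \<noteq> 0" for u X
  proof -
    have e: "inner (A u X) X = (1 - u) * inner X X + u * inner (P X) X"
      unfolding A_def by (simp add: inner_diff_left algebra_simps)
    have "inner X X > 0" using that by simp
    moreover have "inner (P X) X > 0" using posP that by simp
    ultimately show ?thesis unfolding e using that
      by (cases "u = 1") (auto intro: add_pos_nonneg add_nonneg_pos)
  qed
  have bijA: "bij (A u)" if "0 \<le> u" "u \<le> 1" for u
    using lA posA that by (intro posdef_bij) auto
  define Q where "Q = (\<lambda>u. inv (A u))"
  have lQ: "linear (Q u)" if "0 \<le> u" "u \<le> 1" for u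
    unfolding Q_def using lA bijA[OF that] by (simp add: bij_is_inj eucl.inj_linear_imp_inv_linear)
  have AQ: "A u (Q u X) = X" if "0 \<le> u" "u \<le> 1" for u X
    unfolding Q_def using bijA[OF that] by (simp add: bij_is_surj surj_f_inv_f)
  have QA: "Q u (A u X) = X" if "0 \<le> u" "u \<le> 1" for u X
    unfolding Q_def using bijA[OF that] by (simp add: bij_is_inj)
  have iQ: "inv (Q u) = A u" if "0 \<le> u" "u \<le> 1" for u
    by (rule inv_equality) (simp_all add: AQ QA that)
  have pm: "path_metric inner h u = (\<lambda>X Y. inner (Q u X) Y)" for u
    unfolding path_metric_def path_Phi_def endo1 Q_def A_def P_def by simp
  have metric: "left_inv_metric (\<lambda>X Y. inner (Q u X) Y)" if "0 \<le> u" "u \<le> 1" for u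
  proof -
    have saQ: "inner (Q u X) Y = inner (Q u Y) X" for X Y
      using saA[of u "Q u X" "Q u Y"] by (simp add: AQ[OF that] inner_commute)
    have "bilinear (\<lambda>X Y. inner (Q u X) Y)"
      unfolding bilinear_def
    proof (intro conjI allI)
      fix x show "linear (\<lambda>y. inner (Q u x) y)" by (intro linearI) (simp_all add: inner_add_right)
    next
      fix y show "linear (\<lambda>x. inner (Q u x) y)"
        using lQ[OF that] by (intro linearI) (simp_all add: linear_add linear_cmul inner_add_left)
    qed
    moreover have "inner (Q u X) X > 0" if "X \<noteq> 0" for X
    proof -
      have "Q u X \<noteq> 0" using \<open>X \<noteq> 0\<close> AQ[OF \<open>0 \<le> u\<close> \<open>u \<le> 1\<close>, of X] linear_0[OF lA[of u]] by auto
      then have "inner (A u (Q u X)) (Q u X) > 0" using posA \<open>0 \<le> u\<close> \<open>u \<le> 1\<close> by blast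
      then show ?thesis by (simp add: AQ \<open>0 \<le> u\<close> \<open>u \<le> 1\<close> inner_commute)
    qed
    ultimately show ?thesis unfolding left_inv_metric_def using saQ by blast
  qed
  show "left_inv_metric (path_metric inner h (Sf lam t))"
    unfolding pm s_def[symmetric] using metric s01 by blast
  have inv2: "inv (endo_of (\<lambda>X Y. lam * inner X Y) h) = (\<lambda>X. lam *\<^sub>R P X)"
    unfolding endo2
    by (rule inv_equality) (use lam in \<open>simp_all add: linear_cmul[OF lP] linear_cmul[OF l\<Phi>] P\<Phi> \<Phi>P\<close>)
  have A': "(\<lambda>X. X - t *\<^sub>R (X - lam *\<^sub>R P X)) = (\<lambda>X. D *\<^sub>R A s X)"
  proof
    fix X
    have ds: "D * s = lam * t" unfolding s_def Sf_def D_def[symmetric] using Dpos by simp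
    have "D *\<^sub>R A s X = (D - D * s) *\<^sub>R X + (D * s) *\<^sub>R P X"
      unfolding A_def by (simp add: algebra_simps)
    also have "\<dots> = (1 - t) *\<^sub>R X + (lam * t) *\<^sub>R P X" unfolding ds by (simp add: D_def)
    also have "\<dots> = X - t *\<^sub>R (X - lam *\<^sub>R P X)" by (simp add: algebra_simps)
    finally show "X - t *\<^sub>R (X - lam *\<^sub>R P X) = D *\<^sub>R A s X" by simp
  qed
  have pPhi': "path_Phi (\<lambda>X Y. lam * inner X Y) h t = (\<lambda>X. Q s ((1/D) *\<^sub>R X))"
    unfolding path_Phi_def inv2 A'
    by (rule inv_equality) (use Dpos s01 in \<open>simp_all add: linear_cmul[OF lQ[OF s01]] linear_cmul[OF lA] QA AQ\<close>)
  have ipPhi': "inv (path_Phi (\<lambda>X Y. lam * inner X Y) h t) = (\<lambda>X. D *\<^sub>R A s X)"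
    unfolding pPhi'
    by (rule inv_equality) (use Dpos s01 in \<open>simp_all add: linear_cmul[OF lQ[OF s01]] linear_cmul[OF lA] QA AQ\<close>)
  have pm': "path_metric (\<lambda>X Y. lam * inner X Y) h t = (\<lambda>X Y. (lam / D) * path_metric inner h s X Y)"
    unfolding path_metric_def[of "\<lambda>X Y. lam * inner X Y"] pPhi' pm
    by (simp add: linear_cmul[OF lQ[OF s01]])
  then show "path_metric (\<lambda>X Y. lam * inner X Y) h t
           = (\<lambda>X Y. (lam / ((1 - t) + lam * t)) * path_metric inner h (Sf lam t) X Y)"
    unfolding D_def s_def .
  have "path_kappa br (\<lambda>X Y. lam * inner X Y) h X Y t
      = (lam / D) * sec_k br (path_metric inner h s) (D *\<^sub>R A s X) (D *\<^sub>R A s Y)"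
    unfolding path_kappa_def ipPhi' pm' by (rule sec_k_scale_metric) (use lam Dpos in simp)
  also have "\<dots> = (lam / D) * D^4 * path_kappa br inner h X Y s"
  proof -
    have pPhi: "path_Phi inner h s = Q s" unfolding path_Phi_def endo1 Q_def A_def P_def ..
    have ms: "left_inv_metric (path_metric inner h s)" unfolding pm using metric s01 by blast
    show ?thesis unfolding path_kappa_def pPhi iQ[OF s01] sec_k_hom[OF br ms] by simp
  qed
  finally show "path_kappa br (\<lambda>X Y. lam * inner X Y) h X Y t
           = (lam / ((1 - t) + lam * t)) * ((1 - t) + lam * t)^4 * path_kappa br inner h X Y (Sf lam t)"
    unfolding D_def s_def .
qed


lemma transfer_eps:
  assumes mu: "\<mu> > 0" and e: "\<epsilon> > 0" and P: "\<forall>t. 0 \<le> t \<and> t < \<epsilon> \<longrightarrow> Pr t"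
  shows "\<exists>\<epsilon>'>0. \<forall>t. 0 \<le> t \<and> t < \<epsilon>' \<longrightarrow> t \<le> 1 \<and> Pr (Sf \<mu> t)"
proof -
  define m where "m = min \<epsilon> 1"
  have m: "0 < m" "m \<le> 1" "m \<le> \<epsilon>" unfolding m_def using e by auto
  have mu': "1/\<mu> > 0" using mu by simp
  define e' where "e' = Sf (1/\<mu>) m"
  have e'0: "e' > 0" unfolding e'_def using Sf_pos[OF mu'] m by blast
  have e'1: "e' \<le> 1" unfolding e'_def using Sf_range[OF mu'] m by force
  show ?thesis
  proof (intro exI[of _ e'] conjI allI impI)
    show "0 < e'" by (rule e'0)
    fix t assume t: "0 \<le> t \<and> t < e'"
    then show "t \<le> 1" using e'1 by linarith
    have st: "0 \<le> Sf \<mu> t" "Sf \<mu> t \<le> 1" using Sf_range[OF mu] t e'1 by auto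
    have "Sf \<mu> t < m"
    proof (rule ccontr)
      assume "\<not> Sf \<mu> t < m"
      then have "Sf (1/\<mu>) m \<le> Sf (1/\<mu>) (Sf \<mu> t)" using Sf_mono[OF mu'] m st by simp
      also have "\<dots> = t" using Sf_inv[OF mu] t e'1 by simp
      finally show False using t unfolding e'_def by simp
    qed
    then show "Pr (Sf \<mu> t)" using P st m by simp
  qed
qed

lemma pos_mult_nonneg_iff: "r > 0 \<Longrightarrow> (0 \<le> r * x) = (0 \<le> (x::real))"
  by (simp add: zero_le_mult_iff)

theorem mainTheorem14:
  fixes br :: "'a::euclidean_space \<Rightarrow> 'a \<Rightarrow> 'a"
    and h :: "'a \<Rightarrow> 'a \<Rightarrow> real"
    and lam :: real
  assumes "compact_lie_algebra br"
    and "lam > 0"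
    and "left_inv_metric h"
  shows "(path_nonneg br (\<lambda>X Y. inner X Y) h \<longleftrightarrow> path_nonneg br (\<lambda>X Y. lam * inner X Y) h)
       \<and> (path_loc_nonneg br (\<lambda>X Y. inner X Y) h \<longleftrightarrow> path_loc_nonneg br (\<lambda>X Y. lam * inner X Y) h)
       \<and> (path_inf_nonneg br (\<lambda>X Y. inner X Y) h \<longleftrightarrow> path_inf_nonneg br (\<lambda>X Y. lam * inner X Y) h)"
proof -
  note br = assms(1) and lam = assms(2) and h = assms(3)
  let ?b = "\<lambda>X Y. lam * inner X Y"
  have lam': "1/lam > 0" using lam by simp
  have fac: "lam / ((1 - t) + lam * t) > 0" "((1 - t) + lam * t)^4 > 0" if "0 \<le> t" "t \<le> 1" for t
    using D_pos[OF lam that] lam by auto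
  have K1: "(\<forall>Z1 Z2. sec_k br (path_metric ?b h t) Z1 Z2 \<ge> 0)
      \<longleftrightarrow> (\<forall>Z1 Z2. sec_k br (path_metric inner h (Sf lam t)) Z1 Z2 \<ge> 0)" if "0 \<le> t" "t \<le> 1" for t
  proof -
    have "sec_k br (path_metric ?b h t) Z1 Z2 = (lam / ((1 - t) + lam * t)) * sec_k br (path_metric inner h (Sf lam t)) Z1 Z2" for Z1 Z2
      unfolding key_eqs(1)[OF br h lam that] using fac(1)[OF that] by (intro sec_k_scale_metric) (use D_pos[OF lam that] lam in simp)
    then show ?thesis using pos_mult_nonneg_iff[OF fac(1)[OF that]] by presburger
  qed
  have K2: "path_kappa br ?b h X Y t \<ge> 0 \<longleftrightarrow> path_kappa br inner h X Y (Sf lam t) \<ge> 0"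
    if "0 \<le> t" "t \<le> 1" for t X Y
    unfolding key_eqs(2)[OF br h lam that] using fac[OF that] by (intro pos_mult_nonneg_iff mult_pos_pos)
  have bk: "0 \<le> Sf (1/lam) u \<and> Sf (1/lam) u \<le> 1 \<and> Sf lam (Sf (1/lam) u) = u" if "0 \<le> u" "u \<le> 1" for u
    using Sf_range[OF lam' that] Sf_inv[OF lam' that] by simp
  have fwd: "0 \<le> Sf lam t \<and> Sf lam t \<le> 1" if "0 \<le> t" "t \<le> 1" for t
    using Sf_range[OF lam that] by simp
  have p1: "path_nonneg br inner h \<longleftrightarrow> path_nonneg br ?b h"
  proof (rule iffI)
    assume A: "path_nonneg br inner h"
    show "path_nonneg br ?b h" unfolding path_nonneg_def
    proof (rule allI, rule impI)
      fix t :: real assume t: "0 \<le> t \<and> t \<le> 1"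
      then have "\<forall>Z1 Z2. 0 \<le> sec_k br (path_metric inner h (Sf lam t)) Z1 Z2"
        using A fwd unfolding path_nonneg_def by blast
      then show "\<forall>Z1 Z2. 0 \<le> sec_k br (path_metric ?b h t) Z1 Z2" using K1 t by blast
    qed
  next
    assume A: "path_nonneg br ?b h"
    show "path_nonneg br inner h" unfolding path_nonneg_def
    proof (rule allI, rule impI)
      fix u :: real assume u: "0 \<le> u \<and> u \<le> 1"
      then have u': "0 \<le> Sf (1/lam) u" "Sf (1/lam) u \<le> 1" using bk by auto
      then have "\<forall>Z1 Z2. 0 \<le> sec_k br (path_metric inner h (Sf lam (Sf (1/lam) u))) Z1 Z2"
        using A K1 unfolding path_nonneg_def by blast
      then show "\<forall>Z1 Z2. 0 \<le> sec_k br (path_metric inner h u) Z1 Z2" using bk u by simp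
    qed
  qed
  have p2: "path_loc_nonneg br inner h \<longleftrightarrow> path_loc_nonneg br ?b h"
  proof (rule iffI)
    assume "path_loc_nonneg br inner h"
    then obtain e :: real where e: "e > 0" and A: "\<forall>X Y t. 0 \<le> t \<and> t < e \<longrightarrow> 0 \<le> path_kappa br inner h X Y t"
      unfolding path_loc_nonneg_def by blast
    obtain e' where e': "e' > 0" "\<forall>t. 0 \<le> t \<and> t < e' \<longrightarrow> t \<le> 1 \<and> (\<forall>X Y. 0 \<le> path_kappa br inner h X Y (Sf lam t))"
      using transfer_eps[OF lam e, of "\<lambda>s. \<forall>X Y. 0 \<le> path_kappa br inner h X Y s"] A by blast
    show "path_loc_nonneg br ?b h" unfolding path_loc_nonneg_def
      using e' K2 by blast
  next
    assume "path_loc_nonneg br ?b h"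
    then obtain e :: real where e: "e > 0" and A: "\<forall>X Y t. 0 \<le> t \<and> t < e \<longrightarrow> 0 \<le> path_kappa br ?b h X Y t"
      unfolding path_loc_nonneg_def by blast
    obtain e' where e': "e' > 0" "\<forall>u. 0 \<le> u \<and> u < e' \<longrightarrow> u \<le> 1 \<and> (\<forall>X Y. 0 \<le> path_kappa br ?b h X Y (Sf (1/lam) u))"
      using transfer_eps[OF lam' e, of "\<lambda>s. \<forall>X Y. 0 \<le> path_kappa br ?b h X Y s"] A by blast
    show "path_loc_nonneg br inner h" unfolding path_loc_nonneg_def
    proof (intro exI[of _ e'] conjI allI impI)
      fix X Y u assume u: "0 \<le> u \<and> u < e'"
      then have u1: "u \<le> 1" and k: "0 \<le> path_kappa br ?b h X Y (Sf (1/lam) u)" using e' by auto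
      have "0 \<le> path_kappa br inner h X Y (Sf lam (Sf (1/lam) u))"
        using K2 k bk[of u] u u1 by blast
      then show "0 \<le> path_kappa br inner h X Y u" using bk[of u] u u1 by simp
    qed (rule e'(1))
  qed
  have p3: "path_inf_nonneg br inner h \<longleftrightarrow> path_inf_nonneg br ?b h"
  proof (rule iffI)
    assume A: "path_inf_nonneg br inner h"
    show "path_inf_nonneg br ?b h" unfolding path_inf_nonneg_def
    proof (intro allI)
      fix X Y
      obtain e :: real where e: "e > 0" "\<forall>t. 0 \<le> t \<and> t < e \<longrightarrow> 0 \<le> path_kappa br inner h X Y t"
        using A unfolding path_inf_nonneg_def by blast
      obtain e' where e': "e' > 0" "\<forall>t. 0 \<le> t \<and> t < e' \<longrightarrow> t \<le> 1 \<and> 0 \<le> path_kappa br inner h X Y (Sf lam t)"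
        using transfer_eps[OF lam e(1), of "\<lambda>s. 0 \<le> path_kappa br inner h X Y s"] e(2) by blast
      show "\<exists>e>0. \<forall>t. 0 \<le> t \<and> t < e \<longrightarrow> 0 \<le> path_kappa br ?b h X Y t"
        using e' K2 by blast
    qed
  next
    assume A: "path_inf_nonneg br ?b h"
    show "path_inf_nonneg br inner h" unfolding path_inf_nonneg_def
    proof (intro allI)
      fix X Y
      obtain e :: real where e: "e > 0" "\<forall>t. 0 \<le> t \<and> t < e \<longrightarrow> 0 \<le> path_kappa br ?b h X Y t"
        using A unfolding path_inf_nonneg_def by blast
      obtain e' where e': "e' > 0" "\<forall>u. 0 \<le> u \<and> u < e' \<longrightarrow> u \<le> 1 \<and> 0 \<le> path_kappa br ?b h X Y (Sf (1/lam) u)"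
        using transfer_eps[OF lam' e(1), of "\<lambda>s. 0 \<le> path_kappa br ?b h X Y s"] e(2) by blast
      show "\<exists>e>0. \<forall>t. 0 \<le> t \<and> t < e \<longrightarrow> 0 \<le> path_kappa br inner h X Y t"
      proof (intro exI[of _ e'] conjI allI impI)
        fix u assume u: "0 \<le> u \<and> u < e'"
        then have u1: "u \<le> 1" and k: "0 \<le> path_kappa br ?b h X Y (Sf (1/lam) u)" using e' by auto
        have "0 \<le> path_kappa br inner h X Y (Sf lam (Sf (1/lam) u))"
          using K2 k bk[of u] u u1 by blast
        then show "0 \<le> path_kappa br inner h X Y u" using bk[of u] u u1 by simp
      qed (rule e'(1))
    qed
  qed
  show ?thesis using p1 p2 p3 by blast
qed

end
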